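(* Let $\Omega\subset\mathbb R^d$ be convex and compact with nonempty interior, and let $m\ge 2$. Consider the set $$\mathcal S=\Bigl\{\mathbf x\mapsto\sum_{i=1}^p\psi_i(\mathbf w_i^T\mathbf x):\ p\in\mathbb N,\ \psi_i\in C^{1,1}(\mathbb R)\text{ convex},\ \mathbf w_i\in\mathbb R^d\Bigr\}.$$ (i) The functions $R\colon\mathbb R^d\to\mathbb R$ of the form $R(\mathbf x)=\sum_{i}\psi_i(\mathbf w_i^T\mathbf x)$ with convex $\psi_i$ whose gradient has the form $\nabla R(\mathbf x)=\mathbf W^T\boldsymbol\sigma(\mathbf W\mathbf x)$ for some $q\in\mathbb N$, $\mathbf W\in\mathbb R^{q\times d}$ and $\sigma_i\in\mathcal{LS}^m_{\uparrow}(\mathbb R)$, are dense in $\mathcal S$ with respect to $\|\cdot\|_{C^1(\Omega)}$. (ii) The functions $R$ of the form $R(\mathbf x)=\sum_i\psi_i(\mathbf w_i^T\mathbf x)$ whose gradient has the form $\nabla R(\mathbf x)=\mathbf W^T\mathrm{ReLU}(\mathbf W\mathbf x-\mathbf b)$ for some $q\in\mathbb N$, $\mathbf W\in\mathbb R^{q\times d}$, $\mathbf b\in\mathbb R^q$, are not dense in $\mathcal S$ with respect to $\|\cdot\|_{C^1(\Omega)}$.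
   Context: $C^{1,1}(\mathbb R)$ is the set of differentiable functions with Lipschitz-continuous derivative. $\boldsymbol\sigma$ and $\mathrm{ReLU}(t)=\max(t,0)$ act componentwise. $\mathcal{LS}^m_{\uparrow}(\mathbb R)$ is the set of increasing continuous piecewise-linear functions $\mathbb R\to\mathbb R$ with at most $m$ knots. For $f\colon\mathbb R^d\to\mathbb R$ differentiable, $\|f\|_{C^1(\Omega)}=\sup_{\mathbf x\in\Omega}|f(\mathbf x)|+\sup_{\mathbf x\in\Omega}\|\nabla f(\mathbf x)\|$. *)

theory Defs
  imports "HOL-Analysis.Analysis"
begin

definition C11 :: "(real \<Rightarrow> real) \<Rightarrow> bool" where
  "C11 \<psi> \<longleftrightarrow> (\<exists>\<psi>'. (\<forall>t. (\<psi> has_real_derivative \<psi>' t) (at t))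
                   \<and> (\<exists>L. \<forall>s t. \<bar>\<psi>' s - \<psi>' t\<bar> \<le> L * \<bar>s - t\<bar>))"

text \<open>Increasing continuous piecewise-linear functions with at most m knots:
  there is a finite knot set K with card K \<le> m such that the function is affine on
  every interval containing no knot in its interior.\<close>
definition LS_inc :: "nat \<Rightarrow> (real \<Rightarrow> real) set" where
  "LS_inc m = {\<sigma>. mono \<sigma> \<and> continuous_on UNIV \<sigma> \<and>
     (\<exists>K. finite K \<and> card K \<le> m \<and>
        (\<forall>a b. a < b \<and> {a<..<b} \<inter> K = {} \<longrightarrow>
           (\<exists>c0 c1. \<forall>t\<in>{a..b}. \<sigma> t = c0 + c1 * t)))}"

definition relu :: "real \<Rightarrow> real" where
  "relu t = max t 0"

definition grad :: "('a::euclidean_space \<Rightarrow> real) \<Rightarrow> 'a \<Rightarrow> 'a" where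
  "grad f x = (THE v. (f has_derivative (\<lambda>h. v \<bullet> h)) (at x))"

definition C1_norm :: "'a::euclidean_space set \<Rightarrow> ('a \<Rightarrow> real) \<Rightarrow> real" where
  "C1_norm \<Omega> f = (SUP x\<in>\<Omega>. \<bar>f x\<bar>) + (SUP x\<in>\<Omega>. norm (grad f x))"

definition ridge_sum :: "nat \<Rightarrow> (nat \<Rightarrow> real \<Rightarrow> real) \<Rightarrow> (nat \<Rightarrow> 'a::euclidean_space) \<Rightarrow> 'a \<Rightarrow> real" where
  "ridge_sum p \<psi> w x = (\<Sum>i<p. \<psi> i (w i \<bullet> x))"

definition S_set :: "('a::euclidean_space \<Rightarrow> real) set" where
  "S_set = {f. \<exists>p \<psi> w. (\<forall>i<p. C11 (\<psi> i) \<and> convex_on UNIV (\<psi> i)) \<and> f = ridge_sum p \<psi> w}"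

text \<open>Class (i): convex ridge sums whose gradient is W^T \<sigma>(W x), rows w_j of W, j<q.\<close>
definition class_i :: "nat \<Rightarrow> ('a::euclidean_space \<Rightarrow> real) set" where
  "class_i m = {R. (\<exists>p \<psi> v. (\<forall>i<p. convex_on UNIV (\<psi> i)) \<and> R = ridge_sum p \<psi> v) \<and>
     (\<exists>q (W::nat \<Rightarrow> 'a) \<sigma>. (\<forall>j<q. \<sigma> j \<in> LS_inc m) \<and>
        (\<forall>x. (R has_derivative (\<lambda>h. (\<Sum>j<q. \<sigma> j (W j \<bullet> x) *\<^sub>R W j) \<bullet> h)) (at x)))}"

definition class_ii :: "('a::euclidean_space \<Rightarrow> real) set" where
  "class_ii = {R. (\<exists>p \<psi> v. R = ridge_sum p \<psi> v) \<and>
     (\<exists>q (W::nat \<Rightarrow> 'a) b. 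
        (\<forall>x. (R has_derivative (\<lambda>h. (\<Sum>j<q. relu (W j \<bullet> x - b j) *\<^sub>R W j) \<bullet> h)) (at x)))}"

definition C1_dense_in :: "'a::euclidean_space set \<Rightarrow> ('a \<Rightarrow> real) set \<Rightarrow> ('a \<Rightarrow> real) set \<Rightarrow> bool" where
  "C1_dense_in \<Omega> A B \<longleftrightarrow> (\<forall>f\<in>B. \<forall>\<epsilon>>0. \<exists>g\<in>A. C1_norm \<Omega> (\<lambda>x. f x - g x) < \<epsilon>)"

end

theory Submission
  imports Defs
begin


definition cl :: "real \<Rightarrow> real" where "cl u = relu u - relu (u - 1)"
definition Q :: "real \<Rightarrow> real" where "Q u = (relu u)^2 / 2"
definition Phi :: "real \<Rightarrow> real" where "Phi u = Q u - Q (u - 1)"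

lemma Q_deriv: "(Q has_real_derivative relu t) (at t)"
proof (cases "t = 0")
  case True
  have "((\<lambda>y. (Q y - Q 0) / (y - 0)) \<longlongrightarrow> 0) (at 0)"
  proof (rule Lim_null_comparison)
    show "\<forall>\<^sub>F y in at 0. norm ((Q y - Q 0) / (y - 0)) \<le> \<bar>y\<bar>"
    proof (rule always_eventually, intro allI)
      fix y :: real
      show "norm ((Q y - Q 0) / (y - 0)) \<le> \<bar>y\<bar>"
        by (cases "y > 0") (auto simp: Q_def relu_def power2_eq_square abs_mult field_simps)
    qed
    show "((\<lambda>y::real. \<bar>y\<bar>) \<longlongrightarrow> 0) (at 0)"
      using tendsto_rabs[OF tendsto_ident_at[of "0::real" UNIV]] by simp
  qed
  then show ?thesis using True by (simp add: has_field_derivative_iff relu_def)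
next
  case False
  show ?thesis
  proof (cases "t > 0")
    case True
    have "((\<lambda>u. u^2/2) has_real_derivative t) (at t)"
      by (auto intro!: derivative_eq_intros)
    then have "(Q has_real_derivative t) (at t)"
      by (rule has_field_derivative_transform_within_open[where S="{0<..}"])
         (use True in \<open>auto simp: Q_def relu_def\<close>)
    then show ?thesis using True by (simp add: relu_def)
  next
    case False2: False
    have "((\<lambda>u. 0) has_real_derivative 0) (at t)" by simp
    then have "(Q has_real_derivative 0) (at t)"
      by (rule has_field_derivative_transform_within_open[where S="{..<0}"])
         (use False False2 in \<open>auto simp: Q_def relu_def\<close>)
    then show ?thesis using False2 by (simp add: relu_def)
  qed
qed

lemma Phi_deriv: "(Phi has_real_derivative cl t) (at t)"
proof -
  have h2: "((\<lambda>u. Q (u - 1)) has_real_derivative relu (t - 1) * 1) (at t)"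
    by (rule DERIV_chain2[OF Q_deriv]) (auto intro!: derivative_eq_intros)
  have "((\<lambda>u. Q u - Q (u - 1)) has_real_derivative relu t - relu (t - 1) * 1) (at t)"
    by (rule DERIV_diff[OF Q_deriv h2])
  then show ?thesis unfolding Phi_def[abs_def] cl_def by simp
qed

lemma cl_mono: "x \<le> y \<Longrightarrow> cl x \<le> cl y"
  by (auto simp: cl_def relu_def)

lemma cl_bounds: "0 \<le> cl x" "cl x \<le> 1"
  by (auto simp: cl_def relu_def)

lemma cl_lip: "\<bar>cl x - cl y\<bar> \<le> \<bar>x - y\<bar>"
  by (auto simp: cl_def relu_def)

lemma cl_le0: "x \<le> 0 \<Longrightarrow> cl x = 0" and cl_ge1: "x \<ge> 1 \<Longrightarrow> cl x = 1"
  by (auto simp: cl_def relu_def)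

lemma cl_cont: "continuous_on UNIV cl"
  unfolding cl_def relu_def by (intro continuous_intros)

lemma scaled_Phi_deriv:
  assumes "r > 0"
  shows "((\<lambda>u. r * Phi ((u - c) / r)) has_real_derivative cl ((t - c) / r)) (at t)"
proof -
  have h: "((\<lambda>u. Phi ((u - c) / r)) has_real_derivative cl ((t - c) / r) * (1 / r)) (at t)"
    by (rule DERIV_chain2[OF Phi_deriv]) (use assms in \<open>auto intro!: derivative_eq_intros\<close>)
  have "((\<lambda>u. r * Phi ((u - c) / r)) has_real_derivative r * (cl ((t - c) / r) * (1 / r))) (at t)"
    by (rule DERIV_cmult[OF h])
  then show ?thesis using assms by (simp add: field_simps)
qed

lemma deriv_mono_convex:
  assumes "\<And>x. (f has_real_derivative f' x) (at x)" "convex_on UNIV f" "x \<le> y"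
  shows "f' x \<le> f' y"
proof -
  have 1: "f y - f x \<ge> f' x * (y - x)"
    by (rule convex_on_imp_above_tangent[OF assms(2)]) (auto intro: has_field_derivative_at_within assms(1))
  have 2: "f x - f y \<ge> f' y * (x - y)"
    by (rule convex_on_imp_above_tangent[OF assms(2)]) (auto intro: has_field_derivative_at_within assms(1))
  show ?thesis
  proof (cases "x = y")
    case False
    with assms(3) have "x < y" by simp
    from 1 2 have "(f' y - f' x) * (y - x) \<ge> 0" by (simp add: algebra_simps)
    with \<open>x < y\<close> show ?thesis by (simp add: zero_le_mult_iff)
  qed simp
qed

lemma ramp_LS:
  assumes "w \<ge> 0" "d > 0"
  shows "(\<lambda>s. w * cl ((s - c) / d)) \<in> LS_inc 2"
proof -
  have mono: "mono (\<lambda>s. w * cl ((s - c) / d))"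
    using assms by (auto intro!: monoI mult_left_mono cl_mono divide_right_mono)
  have cont: "continuous_on UNIV (\<lambda>s. w * cl ((s - c) / d))"
    using assms unfolding cl_def relu_def by (intro continuous_intros) auto
  have aff: "\<exists>c0 c1. \<forall>t\<in>{a..b}. w * cl ((t - c) / d) = c0 + c1 * t"
    if ab: "a < b" "{a<..<b} \<inter> {c, c + d} = {}" for a b
  proof -
    have n1: "\<not> (a < c \<and> c < b)" "\<not> (a < c + d \<and> c + d < b)"
      using ab(2) by auto
    have "b \<le> c \<or> (c \<le> a \<and> b \<le> c + d) \<or> c + d \<le> a"
      using ab(1) n1 by linarith
    then show ?thesis
    proof (elim disjE)
      assume "b \<le> c"
      then have "\<forall>t\<in>{a..b}. w * cl ((t - c) / d) = 0 + 0 * t"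
        using assms by (auto intro!: cl_le0 simp: divide_nonpos_pos)
      then show ?thesis by blast
    next
      assume h: "c \<le> a \<and> b \<le> c + d"
      have "\<forall>t\<in>{a..b}. w * cl ((t - c) / d) = (- w * c / d) + (w / d) * t"
      proof
        fix t assume "t \<in> {a..b}"
        then have "0 \<le> (t - c) / d" "(t - c) / d \<le> 1" using h assms by (auto simp: field_simps)
        then have "cl ((t - c) / d) = (t - c) / d" by (simp add: cl_def relu_def)
        then have "w * cl ((t - c) / d) = w * ((t - c) / d)" by simp
        then show "w * cl ((t - c) / d) = (- w * c / d) + (w / d) * t"
          using assms by (simp add: field_simps)
      qed
      then show ?thesis by blast
    next
      assume "c + d \<le> a"
      then have "\<forall>t\<in>{a..b}. w * cl ((t - c) / d) = w + 0 * t"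
        using assms by (auto simp: cl_ge1 field_simps)
      then show ?thesis by blast
    qed
  qed
  show ?thesis unfolding LS_inc_def
    apply (intro CollectI conjI mono cont exI[of _ "{c, c + d}"])
    using aff by (auto simp: card_insert_if)
qed

lemma const_LS: "(\<lambda>s. k) \<in> LS_inc m"
proof -
  have e: "\<exists>c0 c1. \<forall>t\<in>{a..b}. k = c0 + c1 * t" for a b :: real
    by (rule exI[of _ k], rule exI[of _ 0]) simp
  have mo: "mono (\<lambda>s::real. k)" by (simp add: mono_def)
  show ?thesis
    unfolding LS_inc_def mem_Collect_eq
    apply (intro conjI mo continuous_on_const exI[of _ "{}"])
    using e by simp_all
qed

lemma LS_mono:
  assumes "m \<le> n" shows "LS_inc m \<subseteq> LS_inc n"
proof
  fix \<sigma> assume "\<sigma> \<in> LS_inc m"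
  then obtain K where K: "mono \<sigma>" "continuous_on UNIV \<sigma>" "finite K" "card K \<le> m"
    "\<forall>a b. a < b \<and> {a<..<b} \<inter> K = {} \<longrightarrow> (\<exists>c0 c1. \<forall>t\<in>{a..b}. \<sigma> t = c0 + c1 * t)"
    unfolding LS_inc_def by blast
  have "card K \<le> n" using K(4) assms by linarith
  then show "\<sigma> \<in> LS_inc n" unfolding LS_inc_def mem_Collect_eq
    using K(1,2,3,5) by blast
qed



lemma grid_cell:
  fixes N :: nat and a s D :: real
  assumes "N > 0" "D > 0" "a \<le> s" "s \<le> a + real N * D"
  shows "\<exists>k<N. a + real k * D \<le> s \<and> s \<le> a + real (Suc k) * D"
proof -
  define r where "r = (s - a) / D"
  have r0: "0 \<le> r" and rN: "r \<le> real N"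
    using assms by (auto simp: r_def field_simps)
  have s_eq: "s = a + r * D" using assms by (simp add: r_def)
  show ?thesis
  proof (cases "nat \<lfloor>r\<rfloor> < N")
    case True
    have "real (nat \<lfloor>r\<rfloor>) \<le> r" using r0 by linarith
    moreover have "r \<le> real (Suc (nat \<lfloor>r\<rfloor>))" using r0 by linarith
    ultimately show ?thesis using True assms(2) s_eq
      by (intro exI[of _ "nat \<lfloor>r\<rfloor>"]) (auto intro: mult_right_mono)
  next
    case False
    then have "r \<ge> real N" using r0 by linarith
    then have "r = real N" using rN by simp
    then show ?thesis using assms s_eq
      by (intro exI[of _ "N - 1"]) (auto simp: of_nat_diff)
  qed
qed

lemma sum_split3:
  fixes f :: "nat \<Rightarrow> real"
  assumes "k < N"
  shows "(\<Sum>i<N. f i) = (\<Sum>i<k. f i) + f k + (\<Sum>i\<in>{Suc k..<N}. f i)"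
proof -
  have "(\<Sum>i<N. f i) = (\<Sum>i\<in>{0..<k}. f i) + (\<Sum>i\<in>{k..<N}. f i)"
    using assms by (simp add: lessThan_atLeast0 sum.atLeastLessThan_concat)
  also have "(\<Sum>i\<in>{k..<N}. f i) = f k + (\<Sum>i\<in>{Suc k..<N}. f i)"
    using assms by (simp add: sum.atLeast_Suc_lessThan)
  finally show ?thesis by (simp add: lessThan_atLeast0)
qed

lemma approx1d:
  fixes \<psi> \<psi>' :: "real \<Rightarrow> real"
  assumes der: "\<And>t. (\<psi> has_real_derivative \<psi>' t) (at t)"
    and mono: "\<And>s t. s \<le> t \<Longrightarrow> \<psi>' s \<le> \<psi>' t"
    and lip: "\<And>s t. \<bar>\<psi>' s - \<psi>' t\<bar> \<le> L * \<bar>s - t\<bar>"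
    and ab: "a < b" and eps: "\<epsilon> > 0"
  shows "\<exists>(q::nat) \<sigma> \<Psi>. (\<forall>j<q. \<sigma> j \<in> LS_inc 2) \<and>
           (\<forall>s. (\<Psi> has_real_derivative (\<Sum>j<q. \<sigma> j s)) (at s)) \<and> convex_on UNIV \<Psi> \<and>
           (\<forall>s\<in>{a..b}. \<bar>\<psi> s - \<Psi> s\<bar> \<le> (b - a) * \<epsilon> \<and> \<bar>\<psi>' s - (\<Sum>j<q. \<sigma> j s)\<bar> \<le> \<epsilon>)"
proof -
  have L0: "L \<ge> 0" using lip[of 1 0] by simp
  define N :: nat where "N = nat \<lceil>L * (b - a) / \<epsilon>\<rceil> + 1"
  have Npos: "N > 0" by (simp add: N_def)
  have "real N > L * (b - a) / \<epsilon>" unfolding N_def by linarith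
  then have "L * (b - a) < \<epsilon> * real N" using eps by (simp add: field_simps)
  define D where "D = (b - a) / real N"
  have Dpos: "D > 0" using ab Npos by (simp add: D_def)
  have LD: "L * D < \<epsilon>"
    using \<open>L * (b - a) < \<epsilon> * real N\<close> Npos by (simp add: D_def field_simps)
  have bN: "b = a + real N * D" using Npos by (simp add: D_def)
  define t where "t i = a + real i * D" for i :: nat
  define \<omega> where "\<omega> i = \<psi>' (t (Suc i)) - \<psi>' (t i)" for i
  have tmono: "t i \<le> t j" if "i \<le> j" for i j
    using that Dpos by (simp add: t_def mult_right_mono)
  have om0: "\<omega> i \<ge> 0" for i using mono[OF tmono[of i "Suc i"]] by (simp add: \<omega>_def)
  have omL: "\<omega> i \<le> L * D" for i
  proof -
    have "\<omega> i \<le> \<bar>\<psi>' (t (Suc i)) - \<psi>' (t i)\<bar>" by (simp add: \<omega>_def)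
    also have "\<dots> \<le> L * \<bar>t (Suc i) - t i\<bar>" by (rule lip)
    also have "\<bar>t (Suc i) - t i\<bar> = D" using Dpos by (simp add: t_def algebra_simps)
    finally show ?thesis .
  qed
  define \<sigma> where "\<sigma> j = (if j = 0 then (\<lambda>s. \<psi>' a) else (\<lambda>s. \<omega> (j - 1) * cl ((s - t (j - 1)) / D)))" for j
  define S where "S s = \<psi>' a + (\<Sum>i<N. \<omega> i * cl ((s - t i) / D))" for s
  have sumS: "(\<Sum>j<Suc N. \<sigma> j s) = S s" for s
    unfolding sum.lessThan_Suc_shift by (simp add: \<sigma>_def S_def)
  define \<Psi>0 where "\<Psi>0 s = \<psi>' a * s + (\<Sum>i<N. \<omega> i * (D * Phi ((s - t i) / D)))" for s
  have d0: "(\<Psi>0 has_real_derivative S s) (at s)" for s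
  proof -
    have "((\<lambda>s. \<psi>' a * s) has_real_derivative \<psi>' a) (at s)"
      by (auto intro!: derivative_eq_intros)
    moreover have "((\<lambda>s. \<Sum>i<N. \<omega> i * (D * Phi ((s - t i) / D))) has_real_derivative
                     (\<Sum>i<N. \<omega> i * cl ((s - t i) / D))) (at s)"
      by (intro DERIV_sum DERIV_cmult scaled_Phi_deriv Dpos)
    ultimately show ?thesis unfolding \<Psi>0_def[abs_def] S_def by (rule DERIV_add)
  qed
  define \<Psi> where "\<Psi> s = \<Psi>0 s + (\<psi> a - \<Psi>0 a)" for s
  have dP: "(\<Psi> has_real_derivative S s) (at s)" for s
    unfolding \<Psi>_def[abs_def] using DERIV_add[OF d0 DERIV_const] by simp
  have Smono: "S x \<le> S y" if "x \<le> y" for x y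
    unfolding S_def using that Dpos om0
    by (auto intro!: sum_mono mult_left_mono cl_mono divide_right_mono)
  have cvx: "convex_on UNIV \<Psi>"
    by (rule convex_on_realI[where f'=S]) (auto intro: dP Smono)
  have LS: "\<forall>j<Suc N. \<sigma> j \<in> LS_inc 2"
    using om0 Dpos by (auto simp: \<sigma>_def const_LS intro!: ramp_LS)
  have grad_err: "\<bar>\<psi>' s - S s\<bar> \<le> \<epsilon>" if s: "s \<in> {a..b}" for s
  proof -
    obtain k where k: "k < N" "t k \<le> s" "s \<le> t (Suc k)"
      using grid_cell[OF Npos Dpos, of a s] s bN unfolding t_def by auto
    have lo: "cl ((s - t i) / D) = 1" if "i < k" for i
    proof (rule cl_ge1)
      have "t (Suc i) \<le> t k" using that by (intro tmono) simp
      then have "D \<le> s - t i" using k(2) by (simp add: t_def algebra_simps)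
      then show "1 \<le> (s - t i) / D" using Dpos by simp
    qed
    have hi: "cl ((s - t i) / D) = 0" if "i \<in> {Suc k..<N}" for i
    proof (rule cl_le0)
      have "t (Suc k) \<le> t i" using that by (intro tmono) simp
      then have "s - t i \<le> 0" using k(3) by simp
      then show "(s - t i) / D \<le> 0" using Dpos by (simp add: divide_nonpos_pos)
    qed
    have "(\<Sum>i<N. \<omega> i * cl ((s - t i) / D)) =
          (\<Sum>i<k. \<omega> i * cl ((s - t i) / D)) + \<omega> k * cl ((s - t k) / D) +
          (\<Sum>i\<in>{Suc k..<N}. \<omega> i * cl ((s - t i) / D))"
      by (rule sum_split3[OF k(1)])
    also have "(\<Sum>i<k. \<omega> i * cl ((s - t i) / D)) = (\<Sum>i<k. \<omega> i)"
      using lo by simp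
    also have "(\<Sum>i<k. \<omega> i) = \<psi>' (t k) - \<psi>' (t 0)"
      unfolding \<omega>_def by (rule sum_lessThan_telescope)
    also have "(\<Sum>i\<in>{Suc k..<N}. \<omega> i * cl ((s - t i) / D)) = 0"
      using hi by simp
    finally have Ss: "S s = \<psi>' (t k) + \<omega> k * cl ((s - t k) / D)"
      by (simp add: S_def t_def)
    have "0 \<le> \<omega> k * cl ((s - t k) / D)" "\<omega> k * cl ((s - t k) / D) \<le> \<omega> k"
      using om0[of k] cl_bounds[of "(s - t k) / D"] by (auto intro: mult_left_le)
    moreover have "\<psi>' (t k) \<le> \<psi>' s" "\<psi>' s \<le> \<psi>' (t (Suc k))"
      using mono k by auto
    moreover have "\<psi>' (t (Suc k)) = \<psi>' (t k) + \<omega> k" by (simp add: \<omega>_def)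
    ultimately have "\<bar>\<psi>' s - S s\<bar> \<le> \<omega> k" unfolding Ss by linarith
    also have "\<dots> \<le> \<epsilon>" using omL[of k] LD by linarith
    finally show ?thesis .
  qed
  have fun_err: "\<bar>\<psi> s - \<Psi> s\<bar> \<le> (b - a) * \<epsilon>" if s: "s \<in> {a..b}" for s
  proof (cases "s = a")
    case True then show ?thesis using ab eps by (simp add: \<Psi>_def)
  next
    case False
    with s have as: "a < s" by simp
    have "\<exists>z>a. z < s \<and> (\<lambda>x. \<psi> x - \<Psi> x) s - (\<lambda>x. \<psi> x - \<Psi> x) a = (s - a) * (\<lambda>x. \<psi>' x - S x) z"
      by (rule MVT2[OF as]) (intro DERIV_diff der dP)
    then obtain z where z: "a < z" "z < s" "\<psi> s - \<Psi> s = (s - a) * (\<psi>' z - S z)"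
      by (auto simp: \<Psi>_def)
    have "\<bar>\<psi> s - \<Psi> s\<bar> = (s - a) * \<bar>\<psi>' z - S z\<bar>" using z as by (simp add: abs_mult)
    also have "\<dots> \<le> (b - a) * \<epsilon>"
      using grad_err[of z] z s as by (intro mult_mono) auto
    finally show ?thesis .
  qed
  have H: "(\<forall>j<Suc N. \<sigma> j \<in> LS_inc 2) \<and>
           (\<forall>s. (\<Psi> has_real_derivative (\<Sum>j<Suc N. \<sigma> j s)) (at s)) \<and> convex_on UNIV \<Psi> \<and>
           (\<forall>s\<in>{a..b}. \<bar>\<psi> s - \<Psi> s\<bar> \<le> (b - a) * \<epsilon> \<and> \<bar>\<psi>' s - (\<Sum>j<Suc N. \<sigma> j s)\<bar> \<le> \<epsilon>)"
    using LS dP cvx fun_err grad_err unfolding sumS by blast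
  show ?thesis
    by (rule exI[where x="Suc N"], rule exI[where x="\<sigma>"], rule exI[where x="\<Psi>"]) (rule H)
qed



lemma grad_eq:
  fixes f :: "'a::euclidean_space \<Rightarrow> real"
  assumes "(f has_derivative (\<lambda>h. v \<bullet> h)) (at x)"
  shows "grad f x = v"
  unfolding grad_def
proof (rule the_equality)
  show "(f has_derivative (\<lambda>h. v \<bullet> h)) (at x)" by (rule assms)
  fix u assume "(f has_derivative (\<lambda>h. u \<bullet> h)) (at x)"
  from has_derivative_unique[OF this assms] have "(\<lambda>h. u \<bullet> h) = (\<lambda>h. v \<bullet> h)" .
  then have "u \<bullet> (u - v) = v \<bullet> (u - v)" by metis
  then have "(u - v) \<bullet> (u - v) = 0" by (simp add: inner_diff_left)
  then show "u = v" by simp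
qed

definition approx_on :: "'a::euclidean_space set \<Rightarrow> real \<Rightarrow> ('a \<Rightarrow> real) \<Rightarrow> ('a \<Rightarrow> real) \<Rightarrow> bool" where
  "approx_on \<Omega> e f g \<longleftrightarrow> (\<exists>F G. (\<forall>x. (f has_derivative (\<lambda>h. F x \<bullet> h)) (at x)) \<and>
      (\<forall>x. (g has_derivative (\<lambda>h. G x \<bullet> h)) (at x)) \<and>
      (\<forall>x\<in>\<Omega>. \<bar>f x - g x\<bar> \<le> e \<and> norm (F x - G x) \<le> e))"

lemma approx_C1:
  assumes "\<Omega> \<noteq> {}" "approx_on \<Omega> e f g"
  shows "C1_norm \<Omega> (\<lambda>x. f x - g x) \<le> 2 * e"
proof -
  obtain F G where FG: "\<And>x. (f has_derivative (\<lambda>h. F x \<bullet> h)) (at x)"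
    "\<And>x. (g has_derivative (\<lambda>h. G x \<bullet> h)) (at x)"
    "\<And>x. x \<in> \<Omega> \<Longrightarrow> \<bar>f x - g x\<bar> \<le> e \<and> norm (F x - G x) \<le> e"
    using assms(2) unfolding approx_on_def by blast
  have gr: "grad (\<lambda>x. f x - g x) x = F x - G x" for x
  proof (rule grad_eq)
    have "((\<lambda>x. f x - g x) has_derivative (\<lambda>h. F x \<bullet> h - G x \<bullet> h)) (at x)"
      by (rule has_derivative_diff[OF FG(1) FG(2)])
    then show "((\<lambda>x. f x - g x) has_derivative (\<lambda>h. (F x - G x) \<bullet> h)) (at x)"
      by (simp add: inner_diff_left)
  qed
  have "(SUP x\<in>\<Omega>. \<bar>f x - g x\<bar>) \<le> e"
    using FG(3) by (intro cSUP_least assms(1)) auto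
  moreover have "(SUP x\<in>\<Omega>. norm (grad (\<lambda>x. f x - g x) x)) \<le> e"
    using FG(3) unfolding gr by (intro cSUP_least assms(1)) auto
  ultimately show ?thesis unfolding C1_norm_def by simp
qed

lemma approx_add:
  assumes "approx_on \<Omega> e1 f1 g1" "approx_on \<Omega> e2 f2 g2"
  shows "approx_on \<Omega> (e1 + e2) (\<lambda>x. f1 x + f2 x) (\<lambda>x. g1 x + g2 x)"
proof -
  obtain F1 G1 where 1: "\<And>x. (f1 has_derivative (\<lambda>h. F1 x \<bullet> h)) (at x)"
    "\<And>x. (g1 has_derivative (\<lambda>h. G1 x \<bullet> h)) (at x)"
    "\<And>x. x \<in> \<Omega> \<Longrightarrow> \<bar>f1 x - g1 x\<bar> \<le> e1 \<and> norm (F1 x - G1 x) \<le> e1"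
    using assms(1) unfolding approx_on_def by blast
  obtain F2 G2 where 2: "\<And>x. (f2 has_derivative (\<lambda>h. F2 x \<bullet> h)) (at x)"
    "\<And>x. (g2 has_derivative (\<lambda>h. G2 x \<bullet> h)) (at x)"
    "\<And>x. x \<in> \<Omega> \<Longrightarrow> \<bar>f2 x - g2 x\<bar> \<le> e2 \<and> norm (F2 x - G2 x) \<le> e2"
    using assms(2) unfolding approx_on_def by blast
  have d1: "((\<lambda>x. f1 x + f2 x) has_derivative (\<lambda>h. (F1 x + F2 x) \<bullet> h)) (at x)" for x
    using has_derivative_add[OF 1(1) 2(1)] by (simp add: inner_add_left)
  have d2: "((\<lambda>x. g1 x + g2 x) has_derivative (\<lambda>h. (G1 x + G2 x) \<bullet> h)) (at x)" for x
    using has_derivative_add[OF 1(2) 2(2)] by (simp add: inner_add_left)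
  have b: "\<bar>(f1 x + f2 x) - (g1 x + g2 x)\<bar> \<le> e1 + e2 \<and> norm ((F1 x + F2 x) - (G1 x + G2 x)) \<le> e1 + e2"
    if "x \<in> \<Omega>" for x
  proof
    show "\<bar>(f1 x + f2 x) - (g1 x + g2 x)\<bar> \<le> e1 + e2" using 1(3)[OF that] 2(3)[OF that] by linarith
    have "norm ((F1 x + F2 x) - (G1 x + G2 x)) \<le> norm (F1 x - G1 x) + norm (F2 x - G2 x)"
      by (rule order_trans[OF _ norm_triangle_ineq]) (simp add: algebra_simps)
    then show "norm ((F1 x + F2 x) - (G1 x + G2 x)) \<le> e1 + e2"
      using 1(3)[OF that] 2(3)[OF that] by linarith
  qed
  show ?thesis unfolding approx_on_def
    by (rule exI[where x="\<lambda>x. F1 x + F2 x"], rule exI[where x="\<lambda>x. G1 x + G2 x"]) (use d1 d2 b in blast)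
qed

lemma sum_concat:
  fixes f g :: "nat \<Rightarrow> 'b::comm_monoid_add"
  shows "(\<Sum>j<p + q. if j < p then f j else g (j - p)) = (\<Sum>j<p. f j) + (\<Sum>j<q. g j)"
  by (induct q) (auto simp: add.assoc)

lemma class_i_add:
  assumes "g1 \<in> class_i m" "g2 \<in> class_i m"
  shows "(\<lambda>x. g1 x + g2 x) \<in> class_i m"
proof -
  obtain p1 \<psi>1 v1 q1 W1 \<sigma>1 where A: "\<forall>i<p1. convex_on UNIV (\<psi>1 i)" "g1 = ridge_sum p1 \<psi>1 v1"
    "\<forall>j<(q1::nat). \<sigma>1 j \<in> LS_inc m"
    "\<forall>x. (g1 has_derivative (\<lambda>h. (\<Sum>j<q1. \<sigma>1 j (W1 j \<bullet> x) *\<^sub>R W1 j) \<bullet> h)) (at x)"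
    using assms(1) unfolding class_i_def by blast
  obtain p2 \<psi>2 v2 q2 W2 \<sigma>2 where B: "\<forall>i<p2. convex_on UNIV (\<psi>2 i)" "g2 = ridge_sum p2 \<psi>2 v2"
    "\<forall>j<(q2::nat). \<sigma>2 j \<in> LS_inc m"
    "\<forall>x. (g2 has_derivative (\<lambda>h. (\<Sum>j<q2. \<sigma>2 j (W2 j \<bullet> x) *\<^sub>R W2 j) \<bullet> h)) (at x)"
    using assms(2) unfolding class_i_def by blast
  define \<psi> where "\<psi> i = (if i < p1 then \<psi>1 i else \<psi>2 (i - p1))" for i
  define v where "v i = (if i < p1 then v1 i else v2 (i - p1))" for i
  define \<sigma> where "\<sigma> j = (if j < q1 then \<sigma>1 j else \<sigma>2 (j - q1))" for j
  define W where "W j = (if j < q1 then W1 j else W2 (j - q1))" for j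
  have r: "(\<lambda>x. g1 x + g2 x) = ridge_sum (p1 + p2) \<psi> v"
  proof
    fix x
    have "ridge_sum (p1 + p2) \<psi> v x = (\<Sum>i<p1 + p2. if i < p1 then \<psi>1 i (v1 i \<bullet> x) else \<psi>2 (i - p1) (v2 (i - p1) \<bullet> x))"
      unfolding ridge_sum_def \<psi>_def v_def by (intro sum.cong) auto
    also have "\<dots> = g1 x + g2 x" unfolding A(2) B(2) ridge_sum_def
      by (rule sum_concat[where f="\<lambda>i. \<psi>1 i (v1 i \<bullet> x)" and g="\<lambda>i. \<psi>2 i (v2 i \<bullet> x)"])
    finally show "g1 x + g2 x = ridge_sum (p1 + p2) \<psi> v x" by simp
  qed
  have c: "\<forall>i<p1 + p2. convex_on UNIV (\<psi> i)" using A(1) B(1) by (auto simp: \<psi>_def)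
  have s: "\<forall>j<q1 + q2. \<sigma> j \<in> LS_inc m" using A(3) B(3) by (auto simp: \<sigma>_def)
  have d: "((\<lambda>x. g1 x + g2 x) has_derivative (\<lambda>h. (\<Sum>j<q1 + q2. \<sigma> j (W j \<bullet> x) *\<^sub>R W j) \<bullet> h)) (at x)" for x
  proof -
    have e: "(\<Sum>j<q1 + q2. \<sigma> j (W j \<bullet> x) *\<^sub>R W j) =
      (\<Sum>j<q1 + q2. if j < q1 then \<sigma>1 j (W1 j \<bullet> x) *\<^sub>R W1 j else \<sigma>2 (j - q1) (W2 (j - q1) \<bullet> x) *\<^sub>R W2 (j - q1))"
      unfolding \<sigma>_def W_def by (intro sum.cong) auto
    show ?thesis using has_derivative_add[OF A(4)[rule_format, of x] B(4)[rule_format, of x]]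
      unfolding e sum_concat[where f="\<lambda>j. \<sigma>1 j (W1 j \<bullet> x) *\<^sub>R W1 j" and g="\<lambda>j. \<sigma>2 j (W2 j \<bullet> x) *\<^sub>R W2 j"]
      by (simp add: inner_add_left)
  qed
  show ?thesis unfolding class_i_def mem_Collect_eq
    using r c s d by blast
qed

lemma class_i_zero: "(\<lambda>x. 0) \<in> class_i m"
  unfolding class_i_def mem_Collect_eq
proof (intro conjI)
  show "\<exists>p \<psi> v. (\<forall>i<p. convex_on UNIV (\<psi> i)) \<and> (\<lambda>x::'a. 0::real) = ridge_sum p \<psi> v"
    by (rule exI[where x=0], rule exI[where x="\<lambda>_ _. 0"], rule exI[where x="\<lambda>_. 0"])
       (simp add: ridge_sum_def fun_eq_iff)
  show "\<exists>q (W::nat \<Rightarrow> 'a) \<sigma>. (\<forall>j<q. \<sigma> j \<in> LS_inc m) \<and>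
        (\<forall>x. ((\<lambda>x. 0) has_derivative (\<lambda>h. (\<Sum>j<q. \<sigma> j (W j \<bullet> x) *\<^sub>R W j) \<bullet> h)) (at x))"
    by (rule exI[where x="0::nat"], rule exI[where x="\<lambda>_. 0"], rule exI[where x="\<lambda>_ _. 0"]) simp
qed



lemma ridge_deriv:
  fixes w :: "'a::euclidean_space"
  assumes "\<And>t. (\<Psi> has_real_derivative S t) (at t)"
  shows "((\<lambda>x. \<Psi> (w \<bullet> x)) has_derivative (\<lambda>h. (S (w \<bullet> x) *\<^sub>R w) \<bullet> h)) (at x)"
proof -
  have l: "((\<lambda>x. w \<bullet> x) has_derivative (\<lambda>h. w \<bullet> h)) (at x)"
    by (auto intro!: derivative_eq_intros)
  have "((\<lambda>x. \<Psi> (w \<bullet> x)) has_derivative (\<lambda>h. (w \<bullet> h) * S (w \<bullet> x))) (at x)"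
    by (rule DERIV_compose_FDERIV[OF assms l])
  then show ?thesis by (simp add: mult.commute)
qed

lemma single_ridge:
  fixes \<Omega> :: "'a::euclidean_space set" and w :: 'a
  assumes "bounded \<Omega>" "2 \<le> m" "C11 \<psi>" "convex_on UNIV \<psi>" "\<epsilon> > 0"
  shows "\<exists>g\<in>class_i m. approx_on \<Omega> \<epsilon> (\<lambda>x. \<psi> (w \<bullet> x)) g"
proof -
  obtain \<psi>' L where der: "\<And>t. (\<psi> has_real_derivative \<psi>' t) (at t)"
    and lip: "\<And>s t. \<bar>\<psi>' s - \<psi>' t\<bar> \<le> L * \<bar>s - t\<bar>"
    using assms(3) unfolding C11_def by blast
  have mono: "\<And>s t. s \<le> t \<Longrightarrow> \<psi>' s \<le> \<psi>' t"
    using deriv_mono_convex[OF der assms(4)] by blast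
  obtain B where B: "\<forall>x\<in>\<Omega>. norm x \<le> B" using assms(1) bounded_iff by auto
  define M where "M = norm w * max B 0 + 1"
  have "norm w * max B 0 \<ge> 0" by simp
  then have Mpos: "M > 0" unfolding M_def by linarith
  have inr: "w \<bullet> x \<in> {-M..M}" if "x \<in> \<Omega>" for x
  proof -
    have "\<bar>w \<bullet> x\<bar> \<le> norm w * norm x" by (rule Cauchy_Schwarz_ineq2)
    also have "\<dots> \<le> norm w * max B 0" using B that by (intro mult_left_mono) auto
    finally show ?thesis unfolding M_def by auto
  qed
  define e' where "e' = \<epsilon> / (2 * M + norm w + 1)"
  have den: "2 * M + norm w + 1 > 0" using Mpos by (simp add: add_pos_nonneg)
  have e'pos: "e' > 0" unfolding e'_def using den assms(5) by simp
  have e1: "(M - - M) * e' \<le> \<epsilon>"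
  proof -
    have "(M - - M) * e' = \<epsilon> * (2 * M) / (2 * M + norm w + 1)" unfolding e'_def by simp
    also have "\<dots> \<le> \<epsilon>" using den assms(5) by (simp add: field_simps)
    finally show ?thesis .
  qed
  have e2: "e' * norm w \<le> \<epsilon>"
  proof -
    have "e' * norm w = \<epsilon> * norm w / (2 * M + norm w + 1)" unfolding e'_def by simp
    also have "\<dots> \<le> \<epsilon>" using den assms(5) Mpos by (simp add: field_simps)
    finally show ?thesis .
  qed
  have mM: "- M < M" using Mpos by simp
  obtain q :: nat and \<sigma> \<Psi> where A: "\<forall>j<q. \<sigma> j \<in> LS_inc 2"
    "\<forall>s. (\<Psi> has_real_derivative (\<Sum>j<q. \<sigma> j s)) (at s)" "convex_on UNIV \<Psi>"
    "\<forall>s\<in>{-M..M}. \<bar>\<psi> s - \<Psi> s\<bar> \<le> (M - - M) * e' \<and> \<bar>\<psi>' s - (\<Sum>j<q. \<sigma> j s)\<bar> \<le> e'"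
    using approx1d[OF der mono lip mM e'pos] by blast
  define S where "S s = (\<Sum>j<q. \<sigma> j s)" for s
  have dP: "\<And>s. (\<Psi> has_real_derivative S s) (at s)" using A(2) by (simp add: S_def)
  define g where "g x = \<Psi> (w \<bullet> x)" for x
  have dg: "(g has_derivative (\<lambda>h. (S (w \<bullet> x) *\<^sub>R w) \<bullet> h)) (at x)" for x
    unfolding g_def[abs_def] by (rule ridge_deriv[OF dP])
  have df: "((\<lambda>x. \<psi> (w \<bullet> x)) has_derivative (\<lambda>h. (\<psi>' (w \<bullet> x) *\<^sub>R w) \<bullet> h)) (at x)" for x
    by (rule ridge_deriv[OF der])
  have gin: "g \<in> class_i m"
    unfolding class_i_def mem_Collect_eq
  proof (intro conjI)
    show "\<exists>p \<psi> v. (\<forall>i<p. convex_on UNIV (\<psi> i)) \<and> g = ridge_sum p \<psi> v"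
      by (rule exI[where x=1], rule exI[where x="\<lambda>_. \<Psi>"], rule exI[where x="\<lambda>_. w"])
         (simp add: ridge_sum_def fun_eq_iff g_def A(3))
    have "(\<Sum>j<q. \<sigma> j (w \<bullet> x) *\<^sub>R w) = S (w \<bullet> x) *\<^sub>R w" for x
      by (simp add: S_def scaleR_sum_left)
    then have hd: "\<forall>x. (g has_derivative (\<lambda>h. (\<Sum>j<q. \<sigma> j ((\<lambda>_. w) j \<bullet> x) *\<^sub>R (\<lambda>_. w) j) \<bullet> h)) (at x)"
      using dg by simp
    have hl: "\<forall>j<q. \<sigma> j \<in> LS_inc m" using A(1) LS_mono[OF assms(2)] by blast
    show "\<exists>q (W::nat \<Rightarrow> 'a) \<sigma>. (\<forall>j<q. \<sigma> j \<in> LS_inc m) \<and>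
        (\<forall>x. (g has_derivative (\<lambda>h. (\<Sum>j<q. \<sigma> j (W j \<bullet> x) *\<^sub>R W j) \<bullet> h)) (at x))"
      by (rule exI[where x=q], rule exI[where x="\<lambda>_. w"], rule exI[where x=\<sigma>]) (rule conjI[OF hl hd])
  qed
  have bnd: "\<bar>\<psi> (w \<bullet> x) - g x\<bar> \<le> \<epsilon> \<and> norm (\<psi>' (w \<bullet> x) *\<^sub>R w - S (w \<bullet> x) *\<^sub>R w) \<le> \<epsilon>"
    if "x \<in> \<Omega>" for x
  proof
    have s: "w \<bullet> x \<in> {-M..M}" by (rule inr[OF that])
    have "\<bar>\<psi> (w \<bullet> x) - \<Psi> (w \<bullet> x)\<bar> \<le> (M - - M) * e'" using A(4) s by blast
    then show "\<bar>\<psi> (w \<bullet> x) - g x\<bar> \<le> \<epsilon>" using e1 unfolding g_def by linarith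
    have "norm (\<psi>' (w \<bullet> x) *\<^sub>R w - S (w \<bullet> x) *\<^sub>R w) = \<bar>\<psi>' (w \<bullet> x) - S (w \<bullet> x)\<bar> * norm w"
      by (simp add: scaleR_diff_left[symmetric])
    also have "\<dots> \<le> e' * norm w"
      using A(4) s unfolding S_def by (intro mult_right_mono) auto
    finally show "norm (\<psi>' (w \<bullet> x) *\<^sub>R w - S (w \<bullet> x) *\<^sub>R w) \<le> \<epsilon>" using e2 by linarith
  qed
  have "approx_on \<Omega> \<epsilon> (\<lambda>x. \<psi> (w \<bullet> x)) g"
    unfolding approx_on_def
    by (rule exI[where x="\<lambda>x. \<psi>' (w \<bullet> x) *\<^sub>R w"], rule exI[where x="\<lambda>x. S (w \<bullet> x) *\<^sub>R w"])
       (intro conjI allI ballI df dg bnd)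
  with gin show ?thesis by blast
qed

lemma approx_zero:
  fixes \<Omega> :: "'a::euclidean_space set"
  assumes "\<epsilon> \<ge> 0"
  shows "approx_on \<Omega> \<epsilon> (\<lambda>x. 0) (\<lambda>x. 0)"
proof -
  have iz: "inner (0::'a) = (\<lambda>h. 0)" by (simp add: fun_eq_iff)
  have d0: "\<forall>x. ((\<lambda>x::'a. 0::real) has_derivative (inner (0::'a))) (at x)"
    unfolding iz by (simp add: has_derivative_const)
  show ?thesis
    unfolding approx_on_def
    apply (rule exI[where x="\<lambda>_. 0"], rule exI[where x="\<lambda>_. 0"])
    using assms d0 by simp
qed

lemma ridge_approx:
  fixes \<Omega> :: "'a::euclidean_space set" and w :: "nat \<Rightarrow> 'a"
  assumes "bounded \<Omega>" "2 \<le> m"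
  shows "(\<forall>i<p. C11 (\<psi> i) \<and> convex_on UNIV (\<psi> i)) \<Longrightarrow> \<epsilon> > 0 \<Longrightarrow>
         \<exists>g\<in>class_i m. approx_on \<Omega> \<epsilon> (ridge_sum p \<psi> w) g"
proof (induct p arbitrary: \<epsilon>)
  case 0
  have r: "ridge_sum 0 \<psi> w = (\<lambda>x. 0)" by (simp add: ridge_sum_def fun_eq_iff)
  have "approx_on \<Omega> \<epsilon> (ridge_sum 0 \<psi> w) (\<lambda>x. 0)"
    unfolding r by (rule approx_zero) (use \<open>0 < \<epsilon>\<close> in linarith)
  then show ?case using class_i_zero by blast
next
  case (Suc p)
  have h2: "\<epsilon> / 2 > 0" using Suc.prems by simp
  obtain g1 where g1: "g1 \<in> class_i m" "approx_on \<Omega> (\<epsilon> / 2) (ridge_sum p \<psi> w) g1"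
    using Suc.hyps[OF _ h2] Suc.prems(1) by auto
  obtain g2 where g2: "g2 \<in> class_i m" "approx_on \<Omega> (\<epsilon> / 2) (\<lambda>x. \<psi> p (w p \<bullet> x)) g2"
    using single_ridge[OF assms(1,2) _ _ h2, of "\<psi> p" "w p"] Suc.prems(1) by auto
  have r: "ridge_sum (Suc p) \<psi> w = (\<lambda>x. ridge_sum p \<psi> w x + \<psi> p (w p \<bullet> x))"
    by (simp add: ridge_sum_def fun_eq_iff)
  have "approx_on \<Omega> (\<epsilon> / 2 + \<epsilon> / 2) (ridge_sum (Suc p) \<psi> w) (\<lambda>x. g1 x + g2 x)"
    unfolding r by (rule approx_add[OF g1(2) g2(2)])
  then show ?case using class_i_add[OF g1(1) g2(1)] by auto
qed

lemma part_i:
  fixes \<Omega> :: "'a::euclidean_space set"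
  assumes "bounded \<Omega>" "\<Omega> \<noteq> {}" "2 \<le> m"
  shows "C1_dense_in \<Omega> (class_i m) S_set"
  unfolding C1_dense_in_def
proof (intro ballI allI impI)
  fix f :: "'a \<Rightarrow> real" and \<epsilon> :: real
  assume f: "f \<in> S_set" and e: "\<epsilon> > 0"
  obtain p \<psi> w where pw: "\<forall>i<p. C11 (\<psi> i) \<and> convex_on UNIV (\<psi> i)" "f = ridge_sum p \<psi> w"
    using f unfolding S_set_def by blast
  obtain g where g: "g \<in> class_i m" "approx_on \<Omega> (\<epsilon> / 3) f g"
    using ridge_approx[OF assms(1,3) pw(1), of "\<epsilon> / 3"] e pw(2) by auto
  have "C1_norm \<Omega> (\<lambda>x. f x - g x) \<le> 2 * (\<epsilon> / 3)" by (rule approx_C1[OF assms(2) g(2)])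
  also have "\<dots> < \<epsilon>" using e by simp
  finally show "\<exists>g\<in>class_i m. C1_norm \<Omega> (\<lambda>x. f x - g x) < \<epsilon>" using g(1) by blast
qed



lemma key_ineq1:
  fixes c d \<beta> :: real
  assumes "c * d \<ge> 0"
  shows "c * relu (d * 2 + \<beta>) - 2 * (c * relu (d * 1 + \<beta>)) + 2 * (c * relu (d * 0 + \<beta>))
         - c * relu (d * (-1) + \<beta>) \<ge> 0"
proof -
  define u where "u = relu (d * 2 + \<beta>) - 2 * relu (d + \<beta>) + 2 * relu \<beta> - relu (\<beta> - d)"
  have eq: "c * relu (d * 2 + \<beta>) - 2 * (c * relu (d * 1 + \<beta>)) + 2 * (c * relu (d * 0 + \<beta>))
         - c * relu (d * (-1) + \<beta>) = c * u"
    by (simp add: u_def algebra_simps)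
  from assms have "(c \<ge> 0 \<and> d \<ge> 0) \<or> (c \<le> 0 \<and> d \<le> 0)"
    by (auto simp: zero_le_mult_iff)
  then show ?thesis unfolding eq
  proof
    assume h: "c \<ge> 0 \<and> d \<ge> 0"
    then have "u \<ge> 0" unfolding u_def relu_def by (simp add: max_def)
    then show "c * u \<ge> 0" using h by simp
  next
    assume h: "c \<le> 0 \<and> d \<le> 0"
    then have "u \<le> 0" unfolding u_def relu_def by (simp add: max_def)
    then show "c * u \<ge> 0" using h by (simp add: mult_nonpos_nonpos)
  qed
qed

lemma key_ineq:
  fixes c d \<beta> :: "nat \<Rightarrow> real" and q :: nat
  assumes "\<And>j. c j * d j \<ge> 0"
  shows "(\<Sum>j<q. c j * relu (d j * 2 + \<beta> j)) - 2 * (\<Sum>j<q. c j * relu (d j * 1 + \<beta> j))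
     + 2 * (\<Sum>j<q. c j * relu (d j * 0 + \<beta> j)) - (\<Sum>j<q. c j * relu (d j * (-1) + \<beta> j)) \<ge> 0"
proof -
  have "(\<Sum>j<q. c j * relu (d j * 2 + \<beta> j)) - 2 * (\<Sum>j<q. c j * relu (d j * 1 + \<beta> j))
     + 2 * (\<Sum>j<q. c j * relu (d j * 0 + \<beta> j)) - (\<Sum>j<q. c j * relu (d j * (-1) + \<beta> j)) =
    (\<Sum>j<q. c j * relu (d j * 2 + \<beta> j) - 2 * (c j * relu (d j * 1 + \<beta> j)) + 2 * (c j * relu (d j * 0 + \<beta> j))
         - c j * relu (d j * (-1) + \<beta> j))"
    by (simp add: sum.distrib sum_subtractf sum_distrib_left)
  also have "\<dots> \<ge> 0" by (intro sum_nonneg key_ineq1 assms)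
  finally show ?thesis .
qed

lemma cl_vals: "cl (-1) = 0" "cl 0 = 0" "cl 1 = 1" "cl 2 = 1"
  by (auto simp: cl_def relu_def)

lemma part_ii:
  fixes \<Omega> :: "'a::euclidean_space set"
  assumes "compact \<Omega>" "interior \<Omega> \<noteq> {}"
  shows "\<not> C1_dense_in \<Omega> class_ii S_set"
proof -
  obtain x0 where x0: "x0 \<in> interior \<Omega>" using assms(2) by blast
  then obtain r where r: "r > 0" "ball x0 r \<subseteq> \<Omega>"
    using mem_interior by blast
  obtain e :: 'a where e: "e \<in> Basis" using nonempty_Basis by blast
  have ee: "e \<bullet> e = 1" using e by simp
  define \<rho> where "\<rho> = r / 3"
  have rho: "\<rho> > 0" using r by (simp add: \<rho>_def)
  define X where "X t = x0 + (\<rho> * t) *\<^sub>R e" for t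
  have XO: "X t \<in> \<Omega>" if "\<bar>t\<bar> \<le> 2" for t
  proof -
    have "dist x0 (X t) = \<rho> * \<bar>t\<bar>" using e rho by (simp add: X_def dist_norm abs_mult)
    also have "\<dots> \<le> \<rho> * 2" using that rho by (intro mult_left_mono) auto
    also have "\<dots> < r" using r by (simp add: \<rho>_def)
    finally show ?thesis using r(2) by auto
  qed
  define c0 where "c0 = e \<bullet> x0"
  define \<psi> where "\<psi> u = \<rho> * Phi ((u - c0) / \<rho>)" for u
  define \<psi>' where "\<psi>' u = cl ((u - c0) / \<rho>)" for u
  have dpsi: "(\<psi> has_real_derivative \<psi>' t) (at t)" for t
    unfolding \<psi>_def[abs_def] \<psi>'_def by (rule scaled_Phi_deriv[OF rho])
  have C11: "C11 \<psi>"
    unfolding C11_def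
  proof (intro exI conjI allI)
    show "(\<psi> has_real_derivative \<psi>' t) (at t)" for t by (rule dpsi)
    show "\<bar>\<psi>' s - \<psi>' t\<bar> \<le> (1 / \<rho>) * \<bar>s - t\<bar>" for s t
    proof -
      have "\<bar>\<psi>' s - \<psi>' t\<bar> \<le> \<bar>(s - c0) / \<rho> - (t - c0) / \<rho>\<bar>" unfolding \<psi>'_def by (rule cl_lip)
      also have "\<dots> = (1 / \<rho>) * \<bar>s - t\<bar>" using rho by (simp add: diff_divide_distrib[symmetric] abs_div)
      finally show ?thesis .
    qed
  qed
  have cvx: "convex_on UNIV \<psi>"
    by (rule convex_on_realI[where f'=\<psi>']) (use dpsi rho in \<open>auto simp: \<psi>'_def intro!: cl_mono divide_right_mono\<close>)
  define f where "f = ridge_sum 1 (\<lambda>_. \<psi>) (\<lambda>_. e)"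
  have f_eq: "f x = \<psi> (e \<bullet> x)" for x by (simp add: f_def ridge_sum_def)
  have fS: "f \<in> S_set" unfolding S_set_def f_def mem_Collect_eq
    by (rule exI[where x=1], rule exI[where x="\<lambda>_. \<psi>"], rule exI[where x="\<lambda>_. e"])
       (use C11 cvx in simp)
  have df: "(f has_derivative (\<lambda>h. (\<psi>' (e \<bullet> x) *\<^sub>R e) \<bullet> h)) (at x)" for x
    unfolding f_eq[abs_def] by (rule ridge_deriv[OF dpsi])
  have main: "\<not> C1_norm \<Omega> (\<lambda>x. f x - g x) < 1 / 8" if g: "g \<in> class_ii" for g
  proof
    assume lt: "C1_norm \<Omega> (\<lambda>x. f x - g x) < 1 / 8"
    obtain q :: nat and W :: "nat \<Rightarrow> 'a" and b where
      dg: "\<forall>x. (g has_derivative (\<lambda>h. (\<Sum>j<q. relu (W j \<bullet> x - b j) *\<^sub>R W j) \<bullet> h)) (at x)"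
      using g unfolding class_ii_def by blast
    define G where "G x = (\<Sum>j<q. relu (W j \<bullet> x - b j) *\<^sub>R W j)" for x
    define Dv where "Dv x = \<psi>' (e \<bullet> x) *\<^sub>R e - G x" for x
    have dfg: "((\<lambda>x. f x - g x) has_derivative (\<lambda>h. Dv x \<bullet> h)) (at x)" for x
    proof -
      have "((\<lambda>x. f x - g x) has_derivative (\<lambda>h. (\<psi>' (e \<bullet> x) *\<^sub>R e) \<bullet> h - G x \<bullet> h)) (at x)"
        using has_derivative_diff[OF df dg[rule_format, of x]] unfolding G_def .
      then show ?thesis unfolding Dv_def by (simp add: inner_diff_left)
    qed
    have gr: "grad (\<lambda>x. f x - g x) x = Dv x" for x by (rule grad_eq[OF dfg])
    have contD: "continuous_on UNIV Dv"
      unfolding Dv_def G_def \<psi>'_def cl_def relu_def using rho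
      by (intro continuous_intros) auto
    have bddD: "bdd_above ((\<lambda>x. norm (grad (\<lambda>x. f x - g x) x)) ` \<Omega>)"
    proof -
      have "continuous_on \<Omega> (\<lambda>x. norm (Dv x))"
        by (intro continuous_intros continuous_on_subset[OF contD]) auto
      then have "compact ((\<lambda>x. norm (Dv x)) ` \<Omega>)" by (rule compact_continuous_image[OF _ assms(1)])
      then show ?thesis unfolding gr by (intro bounded_imp_bdd_above compact_imp_bounded)
    qed
    have contfg: "continuous_on \<Omega> (\<lambda>x. \<bar>f x - g x\<bar>)"
    proof -
      have "continuous_on UNIV (\<lambda>x. f x - g x)"
        by (intro continuous_at_imp_continuous_on ballI has_derivative_continuous[OF dfg])
      then have "continuous_on \<Omega> (\<lambda>x. f x - g x)" by (rule continuous_on_subset) simp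
      then show ?thesis by (rule continuous_on_rabs)
    qed
    have bddF: "bdd_above ((\<lambda>x. \<bar>f x - g x\<bar>) ` \<Omega>)"
      using compact_continuous_image[OF contfg assms(1)]
      by (intro bounded_imp_bdd_above compact_imp_bounded)
    have x0O: "x0 \<in> \<Omega>" using x0 interior_subset by blast
    have S1: "(SUP x\<in>\<Omega>. \<bar>f x - g x\<bar>) \<ge> 0"
      by (rule cSUP_upper2[OF bddF x0O]) simp
    have normD: "norm (Dv (X t)) < 1 / 8" if "\<bar>t\<bar> \<le> 2" for t
    proof -
      have "norm (grad (\<lambda>x. f x - g x) (X t)) \<le> (SUP x\<in>\<Omega>. norm (grad (\<lambda>x. f x - g x) x))"
        by (rule cSUP_upper[OF XO[OF that] bddD])
      then show ?thesis using lt S1 unfolding C1_norm_def gr by linarith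
    qed
    define cc where "cc j = W j \<bullet> e" for j
    define dd where "dd j = \<rho> * (W j \<bullet> e)" for j
    define \<beta> where "\<beta> j = W j \<bullet> x0 - b j" for j
    define gg where "gg t = (\<Sum>j<q. cc j * relu (dd j * t + \<beta> j))" for t
    have eD: "e \<bullet> Dv (X t) = cl t - gg t" for t
    proof -
      have "e \<bullet> (X t) = c0 + \<rho> * t" using ee by (simp add: X_def c0_def inner_add_right)
      then have 1: "\<psi>' (e \<bullet> X t) = cl t" using rho by (simp add: \<psi>'_def)
      have "e \<bullet> G (X t) = (\<Sum>j<q. relu (W j \<bullet> X t - b j) * (e \<bullet> W j))"
        by (simp add: G_def inner_sum_right)
      also have "\<dots> = gg t"
        unfolding gg_def cc_def dd_def \<beta>_def X_def
      proof (intro sum.cong refl)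
        fix j
        have a: "W j \<bullet> (x0 + (\<rho> * t) *\<^sub>R e) - b j = \<rho> * (W j \<bullet> e) * t + (W j \<bullet> x0 - b j)"
          by (simp add: inner_add_right)
        have b: "e \<bullet> W j = W j \<bullet> e" by (rule inner_commute)
        show "relu (W j \<bullet> (x0 + (\<rho> * t) *\<^sub>R e) - b j) * (e \<bullet> W j) =
              W j \<bullet> e * relu (\<rho> * (W j \<bullet> e) * t + (W j \<bullet> x0 - b j))"
          unfolding a b by (rule mult.commute)
      qed
      finally show ?thesis unfolding Dv_def using 1 ee by (simp add: inner_diff_right)
    qed
    have close: "\<bar>gg t - cl t\<bar> < 1 / 8" if "\<bar>t\<bar> \<le> 2" for t
    proof -
      have "\<bar>Dv (X t) \<bullet> e\<bar> \<le> norm (Dv (X t))" by (rule Basis_le_norm[OF e])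
      then have "\<bar>e \<bullet> Dv (X t)\<bar> < 1 / 8" using normD[OF that] by (simp add: inner_commute)
      then show ?thesis unfolding eD by linarith
    qed
    have "gg 2 - 2 * gg 1 + 2 * gg 0 - gg (-1) \<ge> 0"
      unfolding gg_def
    proof (rule key_ineq)
      fix j
      have "cc j * dd j = \<rho> * (W j \<bullet> e)^2" by (simp add: cc_def dd_def power2_eq_square)
      then show "cc j * dd j \<ge> 0" using rho by simp
    qed
    moreover have "\<bar>gg 2 - cl 2\<bar> < 1/8" "\<bar>gg 1 - cl 1\<bar> < 1/8" "\<bar>gg 0 - cl 0\<bar> < 1/8" "\<bar>gg (-1) - cl (-1)\<bar> < 1/8"
      by (rule close, simp)+
    moreover note cl_vals
    ultimately show False by linarith
  qed
  show ?thesis unfolding C1_dense_in_def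
  proof
    assume asm: "\<forall>f\<in>S_set. \<forall>\<epsilon>>0. \<exists>g\<in>class_ii. C1_norm \<Omega> (\<lambda>x. f x - g x) < \<epsilon>"
    have h: "\<forall>\<epsilon>>0. \<exists>g\<in>class_ii. C1_norm \<Omega> (\<lambda>x. f x - g x) < \<epsilon>"
      by (rule bspec[OF asm fS])
    have "(1::real) / 8 > 0" by simp
    then obtain g where "g \<in> class_ii" "C1_norm \<Omega> (\<lambda>x. f x - g x) < 1 / 8"
      using h by blast
    with main show False by blast
  qed
qed


theorem corollary1:
  fixes \<Omega> :: "'a::euclidean_space set" and m :: nat
  assumes "convex \<Omega>" and "compact \<Omega>" and "interior \<Omega> \<noteq> {}" and "m \<ge> 2"
  shows "C1_dense_in \<Omega> (class_i m) S_set \<and> \<not> C1_dense_in \<Omega> class_ii S_set"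
proof
  have b: "bounded \<Omega>" using assms(2) by (rule compact_imp_bounded)
  have ne: "\<Omega> \<noteq> {}" using assms(3) interior_subset by blast
  show "C1_dense_in \<Omega> (class_i m) S_set" by (rule part_i[OF b ne assms(4)])
  show "\<not> C1_dense_in \<Omega> class_ii S_set" by (rule part_ii[OF assms(2,3)])
qed

end
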